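(* There exists $\delta_0>0$ such that for every $0<\delta<\delta_0$ the following holds. If $\gamma:[0,n]\to\mathbb{H}^3$ is a $(1+\delta,\delta)$-quasigeodesic and $\bar\gamma$ is the geodesic segment with endpoints $\gamma(0)$ and $\gamma(n)$, then $\gamma([0,n])$ is contained in the $\eta$-neighborhood of $\bar\gamma$, where $\eta=5\delta^{1/5}$.
   Context: A $(1+\delta,\delta)$-quasigeodesic is a continuous map $\gamma:[0,n]\to\mathbb{H}^3$ with $\frac{|s-t|}{1+\delta}-\delta\le d_{\mathbb{H}^3}(\gamma(s),\gamma(t))\le(1+\delta)|s-t|+\delta$ for all $s,t\in[0,n]$. *)

theory Defs
  imports "HOL-Analysis.Analysis"
begin

text \<open>Hyperboloid model of hyperbolic 3-space: points (t, v) with t > 0, v in R^3,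
  and t^2 - |v|^2 = 1, inside R x R^3 with Minkowski bilinear form.\<close>

type_synonym pt4 = "real \<times> (real^3)"

definition mink :: "pt4 \<Rightarrow> pt4 \<Rightarrow> real" where
  "mink x y = fst x * fst y - (snd x \<bullet> snd y)"

definition H3 :: "pt4 set" where
  "H3 = {x. fst x > 0 \<and> mink x x = 1}"

definition hdist :: "pt4 \<Rightarrow> pt4 \<Rightarrow> real" where
  "hdist x y = arcosh (mink x y)"

definition quasigeodesic :: "real \<Rightarrow> real \<Rightarrow> (real \<Rightarrow> pt4) \<Rightarrow> bool" where
  "quasigeodesic \<delta> n \<gamma> \<longleftrightarrow>
     continuous_on {0..n} \<gamma> \<and> \<gamma> ` {0..n} \<subseteq> H3 \<and>
     (\<forall>s\<in>{0..n}. \<forall>t\<in>{0..n}.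
        \<bar>s - t\<bar> / (1 + \<delta>) - \<delta> \<le> hdist (\<gamma> s) (\<gamma> t) \<and>
        hdist (\<gamma> s) (\<gamma> t) \<le> (1 + \<delta>) * \<bar>s - t\<bar> + \<delta>)"

definition geodesic_segment :: "pt4 \<Rightarrow> pt4 \<Rightarrow> pt4 set" where
  "geodesic_segment p q =
     (if p = q then {p}
      else (let L = hdist p q in
        (\<lambda>t. (sinh ((1 - t) * L) / sinh L) *\<^sub>R p + (sinh (t * L) / sinh L) *\<^sub>R q) ` {0..1}))"

definition hnbhd :: "real \<Rightarrow> pt4 set \<Rightarrow> pt4 set" where
  "hnbhd \<eta> A = {x \<in> H3. \<exists>y\<in>A. hdist x y < \<eta>}"

end

theory Submission
  imports Defs
begin


lemma mink_sym: "mink x y = mink y x"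
  by (simp add: mink_def inner_commute mult.commute)

lemma mink_add_left: "mink (x + y) z = mink x z + mink y z"
  by (simp add: mink_def inner_add_left algebra_simps)
lemma mink_add_right: "mink z (x + y) = mink z x + mink z y"
  by (simp add: mink_def inner_add_right algebra_simps)
lemma mink_diff_left: "mink (x - y) z = mink x z - mink y z"
  by (simp add: mink_def inner_diff_left algebra_simps)
lemma mink_diff_right: "mink z (x - y) = mink z x - mink z y"
  by (simp add: mink_def inner_diff_right algebra_simps)
lemma mink_scale_left: "mink (a *\<^sub>R x) z = a * mink x z"
  by (simp add: mink_def algebra_simps)
lemma mink_scale_right: "mink z (a *\<^sub>R x) = a * mink z x"
  by (simp add: mink_def algebra_simps)
lemma mink_zero_left[simp]: "mink 0 z = 0" by (simp add: mink_def)
lemma mink_zero_right[simp]: "mink z 0 = 0" by (simp add: mink_def)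

lemmas mink_lin = mink_add_left mink_add_right mink_diff_left mink_diff_right
  mink_scale_left mink_scale_right

lemma H3_D: "x \<in> H3 \<Longrightarrow> fst x > 0 \<and> (fst x)^2 = 1 + snd x \<bullet> snd x"
  by (auto simp: H3_def mink_def power2_eq_square)

lemma rev_cs:
  assumes "e \<in> H3"
  shows "mink v v \<le> (mink v e)^2"
proof -
  obtain a u where e: "e = (a,u)" by fastforce
  obtain b z where v: "v = (b,z)" by fastforce
  have a2: "a^2 = 1 + u \<bullet> u" using H3_D[OF assms] e by simp
  define U where "U = u \<bullet> u"
  define Z where "Z = z \<bullet> z"
  define c where "c = u \<bullet> z"
  have U0: "U \<ge> 0" "Z \<ge> 0" by (auto simp: U_def Z_def)
  have cs: "c^2 \<le> U * Z"
  proof -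
    have "\<bar>c\<bar> \<le> norm u * norm z" unfolding c_def by (rule Cauchy_Schwarz_ineq2)
    hence "\<bar>c\<bar>^2 \<le> (norm u * norm z)^2"
      by (rule power_mono) simp
    hence "c^2 \<le> (norm u * norm z)^2" by simp
    also have "\<dots> = U * Z" by (simp add: U_def Z_def power_mult_distrib dot_square_norm)
    finally show ?thesis .
  qed
  have goal: "b^2 - Z \<le> (a*b - c)^2"
  proof (cases "U = 0")
    case True
    with cs have "c * c \<le> 0" by (simp add: power2_eq_square)
    hence "c = 0" by (metis mult_eq_0_iff order_antisym_conv zero_le_square)
    have "a*a = 1" using a2 True by (simp add: U_def power2_eq_square)
    hence "(a*b)^2 = b^2" by (simp add: power_mult_distrib power2_eq_square)
    thus ?thesis using U0 \<open>c = 0\<close> by simp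
  next
    case False
    hence Up: "U > 0" using U0 by simp
    have eq: "U * ((a*b - c)^2 - (b^2 - Z)) - (U*b - a*c)^2 = U*Z - c^2"
    proof -
      have "a^2 = 1 + U" using a2 by (simp add: U_def)
      thus ?thesis by algebra
    qed
    have "U * ((a*b - c)^2 - (b^2 - Z)) \<ge> (U*b - a*c)^2"
      using eq cs by linarith
    hence "U * ((a*b - c)^2 - (b^2 - Z)) \<ge> 0" by (smt (verit) zero_le_power2)
    thus ?thesis using Up by (simp add: zero_le_mult_iff)
  qed
  have m1: "mink v v = b^2 - Z" using v by (simp add: mink_def Z_def power2_eq_square)
  have m2: "mink v e = a*b - c" using e v by (simp add: mink_def c_def inner_commute mult.commute)
  show ?thesis using goal m1 m2 by simp
qed


lemma inner_cs_sq: "(u \<bullet> z)^2 \<le> (u \<bullet> u) * (z \<bullet> (z::real^3))"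
proof -
  have "\<bar>u \<bullet> z\<bar> \<le> norm u * norm z" by (rule Cauchy_Schwarz_ineq2)
  hence "\<bar>u \<bullet> z\<bar>^2 \<le> (norm u * norm z)^2" by (rule power_mono) simp
  thus ?thesis by (simp add: power_mult_distrib dot_square_norm)
qed

lemma H3_fst_gt_norm: "x \<in> H3 \<Longrightarrow> fst x > norm (snd x)"
proof -
  assume x: "x \<in> H3"
  have "(fst x)^2 = 1 + (norm (snd x))^2" using H3_D[OF x] by (simp add: dot_square_norm)
  hence lt: "(norm (snd x))^2 < (fst x)^2" by linarith
  have "0 \<le> fst x" using H3_D[OF x] by simp
  show ?thesis by (rule power_less_imp_less_base[OF lt \<open>0 \<le> fst x\<close>])
qed

lemma mink_pos: assumes "x \<in> H3" "y \<in> H3" shows "mink x y > 0"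
proof -
  have "snd x \<bullet> snd y \<le> norm (snd x) * norm (snd y)" by (rule norm_cauchy_schwarz)
  also have "\<dots> < fst x * fst y"
    using H3_fst_gt_norm[OF assms(1)] H3_fst_gt_norm[OF assms(2)] H3_D[OF assms(1)]
    by (intro mult_strict_mono) auto
  finally show ?thesis by (simp add: mink_def)
qed

lemma mink_self_H3: "x \<in> H3 \<Longrightarrow> mink x x = 1" by (simp add: H3_def)

lemma mink_ge1: assumes "x \<in> H3" "y \<in> H3" shows "mink x y \<ge> 1"
proof -
  have "1 \<le> (mink x y)^2" using rev_cs[OF assms(2), of x] mink_self_H3[OF assms(1)] by simp
  moreover have "mink x y > 0" using mink_pos[OF assms] .
  ultimately show ?thesis
  proof -
    assume sq: "1 \<le> (mink x y)^2" and pos: "mink x y > 0"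
    show ?thesis
    proof (rule ccontr)
      assume "\<not> 1 \<le> mink x y"
      hence "mink x y * mink x y < 1 * 1" using pos by (intro mult_strict_mono) auto
      thus False using sq by (simp add: power2_eq_square)
    qed
  qed
qed

lemma cosh_hdist: "x \<in> H3 \<Longrightarrow> y \<in> H3 \<Longrightarrow> cosh (hdist x y) = mink x y"
  by (simp add: hdist_def mink_ge1)

lemma hdist_nonneg: "x \<in> H3 \<Longrightarrow> y \<in> H3 \<Longrightarrow> hdist x y \<ge> 0"
  by (simp add: hdist_def mink_ge1)

lemma hdist_sym: "hdist x y = hdist y x" by (simp add: hdist_def mink_sym)

lemma hdist_self: "x \<in> H3 \<Longrightarrow> hdist x x = 0" by (simp add: hdist_def H3_def)

lemma mink_eq1: assumes "x \<in> H3" "y \<in> H3" "mink x y = 1" shows "x = y"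
proof -
  define v where "v = y - x"
  have v1: "mink v x = 0" using assms by (simp add: v_def mink_lin mink_sym H3_def)
  have v2: "mink v v = 0" using assms
    by (simp add: v_def mink_lin mink_sym H3_def)
  obtain a u where e: "x = (a,u)" by fastforce
  obtain b z where vv: "v = (b,z)" by fastforce
  have a2: "a^2 = 1 + u \<bullet> u" using H3_D[OF assms(1)] e by simp
  have h1: "b * a = z \<bullet> u" using v1 e vv by (simp add: mink_def)
  have h2: "b * b = z \<bullet> z" using v2 vv by (simp add: mink_def)
  have "(b*a)^2 \<le> (u \<bullet> u) * (z \<bullet> z)" using inner_cs_sq[of u z] h1 by (simp add: inner_commute)
  moreover have "b^2 * a^2 = (b*a)^2" by (simp add: power_mult_distrib)
  moreover have "(a^2 - 1)*b^2 = (u \<bullet> u) * (z \<bullet> z)" using a2 h2 by (simp add: power2_eq_square)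
  ultimately have "b^2 * a^2 \<le> (a^2 - 1) * b^2" by linarith
  hence "b^2 \<le> 0" by (simp add: algebra_simps)
  hence "b = 0" by simp
  hence "z \<bullet> z = 0" using h2 by simp
  hence "z = 0" by simp
  hence "v = 0" using vv \<open>b = 0\<close> by (simp add: zero_prod_def)
  thus ?thesis by (simp add: v_def)
qed

lemma cs_perp:
  assumes e: "e \<in> H3" and y: "mink y e = 0" and z: "mink z e = 0"
  shows "(mink y z)^2 \<le> mink y y * mink z z" "mink y y \<le> 0"
proof -
  have neg: "\<And>w. mink w e = 0 \<Longrightarrow> mink w w \<le> 0" using rev_cs[OF e] by (metis power2_eq_square mult_zero_left)
  define A where "A = mink z z"
  define B where "B = mink y z"
  define C where "C = mink y y"
  have A0: "A \<le> 0" using neg[OF z] by (simp add: A_def)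
  have C0: "C \<le> 0" using neg[OF y] by (simp add: C_def)
  have quad: "C + 2 * l * B + l^2 * A \<le> 0" for l
  proof -
    have "mink (y + l *\<^sub>R z) e = 0" using y z by (simp add: mink_lin)
    hence "mink (y + l *\<^sub>R z) (y + l *\<^sub>R z) \<le> 0" by (rule neg)
    moreover have "mink (y + l *\<^sub>R z) (y + l *\<^sub>R z) = C + 2 * l * B + l^2 * A"
      by (simp add: A_def B_def C_def mink_lin mink_sym[of z y] power2_eq_square algebra_simps)
    ultimately show ?thesis by simp
  qed
  show "(mink y z)^2 \<le> mink y y * mink z z"
  proof (cases "A = 0")
    case True
    have "B = 0"
    proof (rule ccontr)
      assume "B \<noteq> 0"
      have "C + 2 * ((1 - C) / (2*B)) * B + ((1 - C) / (2*B))^2 * A \<le> 0" by (rule quad)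
      moreover have "2 * ((1 - C) / (2*B)) * B = 1 - C" using \<open>B \<noteq> 0\<close> by simp
      ultimately show False using True by simp
    qed
    thus ?thesis using True by (simp add: A_def B_def C_def)
  next
    case False
    hence An: "A < 0" using A0 by simp
    have "C + 2 * (- B / A) * B + (- B / A)^2 * A \<le> 0" by (rule quad)
    moreover have "2 * (- B / A) * B + (- B / A)^2 * A = - (B^2 / A)"
      using An by (simp add: power2_eq_square)
    ultimately have "C \<le> B^2 / A" by linarith
    hence "B^2 \<le> C * A" using An by (simp add: neg_le_divide_eq)
    thus ?thesis by (simp add: A_def B_def C_def mult.commute)
  qed
  show "mink y y \<le> 0" using C0 by (simp add: C_def)
qed


lemma cosh_exp: "cosh (x::real) = (exp x + exp (- x)) / 2"
  by (simp add: cosh_def field_simps)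

lemma sqrt_exp_ln: "x > 0 \<Longrightarrow> exp (ln x / 2) = sqrt x"
  by (simp add: powr_half_sqrt[symmetric] powr_def)

locale frame =
  fixes e0 e1 :: pt4
  assumes e0H: "e0 \<in> H3" and e11: "mink e1 e1 = -1" and e01: "mink e0 e1 = 0"
begin

definition "X0 x = mink x e0"
definition "X1 x = - mink x e1"
definition "Yc x = x - X0 x *\<^sub>R e0 - X1 x *\<^sub>R e1"
definition "Wf x = - mink (Yc x) (Yc x)"
definition "Pf x = X0 x + X1 x"
definition "Nf x = X0 x - X1 x"
definition "Qf x = (X0 x)^2 - (X1 x)^2"
definition "sg x = (ln (Pf x) - ln (Nf x)) / 2"

lemma e00: "mink e0 e0 = 1" using e0H by (simp add: H3_def)

lemma Yc_perp0: "mink (Yc x) e0 = 0"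
  by (simp add: Yc_def mink_lin e00 mink_sym[of e1 e0] e01 X0_def)

lemma Yc_perp1: "mink (Yc x) e1 = 0"
  by (simp add: Yc_def mink_lin e11 e01 X1_def)

lemma X0_lin: "X0 (a *\<^sub>R x + b *\<^sub>R z) = a * X0 x + b * X0 z"
  by (simp add: X0_def mink_lin)
lemma X1_lin: "X1 (a *\<^sub>R x + b *\<^sub>R z) = a * X1 x + b * X1 z"
  by (simp add: X1_def mink_lin)
lemma Yc_lin: "Yc (a *\<^sub>R x + b *\<^sub>R z) = a *\<^sub>R Yc x + b *\<^sub>R Yc z"
  by (simp add: Yc_def X0_lin X1_lin algebra_simps)

lemma decomp: "mink x z = X0 x * X0 z - X1 x * X1 z + mink (Yc x) (Yc z)"
proof -
  have x: "x = Yc x + X0 x *\<^sub>R e0 + X1 x *\<^sub>R e1" by (simp add: Yc_def)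
  have z: "z = Yc z + X0 z *\<^sub>R e0 + X1 z *\<^sub>R e1" by (simp add: Yc_def)
  have "mink x z = mink (Yc x + X0 x *\<^sub>R e0 + X1 x *\<^sub>R e1) (Yc z + X0 z *\<^sub>R e0 + X1 z *\<^sub>R e1)"
    using x z by simp
  also have "\<dots> = X0 x * X0 z - X1 x * X1 z + mink (Yc x) (Yc z)"
    by (simp add: mink_lin Yc_perp0 Yc_perp1 mink_sym[of e0 "Yc z"] mink_sym[of e1 "Yc z"]
        e00 e11 e01 mink_sym[of e1 e0])
  finally show ?thesis .
qed

lemma Wf_nonneg: "Wf x \<ge> 0"
  using cs_perp(2)[OF e0H Yc_perp0 Yc_perp0] by (simp add: Wf_def)

lemma Wcs: "\<bar>mink (Yc x) (Yc z)\<bar> \<le> sqrt (Wf x * Wf z)"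
proof -
  have "(mink (Yc x) (Yc z))^2 \<le> Wf x * Wf z"
    using cs_perp(1)[OF e0H Yc_perp0 Yc_perp0, of x z] by (simp add: Wf_def)
  thus ?thesis by (simp add: real_le_rsqrt)
qed

lemma Qf_H3: "x \<in> H3 \<Longrightarrow> Qf x = 1 + Wf x"
  using decomp[of x x] by (simp add: Qf_def Wf_def H3_def power2_eq_square)

lemma X0_ge1: "x \<in> H3 \<Longrightarrow> X0 x \<ge> 1"
  using mink_ge1[of x e0] e0H by (simp add: X0_def)

lemma PN_prod: "Pf x * Nf x = Qf x"
  by (simp add: Pf_def Nf_def Qf_def power2_eq_square algebra_simps)

lemma PN_pos: assumes "x \<in> H3" shows "Pf x > 0" "Nf x > 0"
proof -
  have q: "Pf x * Nf x \<ge> 1" using PN_prod[of x] Qf_H3[OF assms] Wf_nonneg[of x] by simp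
  have s: "Pf x + Nf x > 0" using X0_ge1[OF assms] by (simp add: Pf_def Nf_def)
  show "Pf x > 0" "Nf x > 0" using q s
    by (smt (verit) mult_nonpos_nonneg mult_nonneg_nonpos)+
qed

lemma M_eq:
  assumes "x \<in> H3" "z \<in> H3"
  shows "X0 x * X0 z - X1 x * X1 z = sqrt (Qf x * Qf z) * cosh (sg x - sg z)"
proof -
  have P: "Pf x > 0" "Nf x > 0" "Pf z > 0" "Nf z > 0" using PN_pos assms by auto
  define a where "a = sqrt (Pf x)"
  define b where "b = sqrt (Nf x)"
  define c where "c = sqrt (Pf z)"
  define d where "d = sqrt (Nf z)"
  have pos: "a > 0" "b > 0" "c > 0" "d > 0" using P by (auto simp: a_def b_def c_def d_def)
  have sq: "a^2 = Pf x" "b^2 = Nf x" "c^2 = Pf z" "d^2 = Nf z"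
    using P by (auto simp: a_def b_def c_def d_def)
  have e1': "exp (sg x - sg z) = (a * d) / (b * c)"
    using P by (simp add: sg_def exp_diff sqrt_exp_ln[symmetric] a_def b_def c_def d_def
        diff_divide_distrib)
  have e2': "exp (- (sg x - sg z)) = (b * c) / (a * d)"
    using pos by (simp only: exp_minus e1') simp
  have Q: "sqrt (Qf x * Qf z) = a * b * c * d"
    using pos P by (simp add: PN_prod[symmetric] real_sqrt_mult a_def b_def c_def d_def)
  have "sqrt (Qf x * Qf z) * cosh (sg x - sg z) = (a^2 * d^2 + b^2 * c^2) / 2"
    unfolding cosh_exp e1' e2' Q using pos by (simp add: field_simps power2_eq_square)
  also have "\<dots> = X0 x * X0 z - X1 x * X1 z"
    unfolding sq by (simp add: Pf_def Nf_def field_simps)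
  finally show ?thesis by simp
qed

lemma mink_lower:
  assumes "x \<in> H3" "z \<in> H3"
  shows "mink x z \<ge> sqrt (Qf x * Qf z) * cosh (sg x - sg z) - sqrt (Wf x * Wf z)"
  using decomp[of x z] M_eq[OF assms] Wcs[of x z] by linarith

lemma mink_upper:
  assumes "x \<in> H3" "z \<in> H3"
  shows "mink x z \<le> sqrt (Qf x * Qf z) * cosh (sg x - sg z) + sqrt (Wf x * Wf z)"
  using decomp[of x z] M_eq[OF assms] Wcs[of x z] by linarith

end


definition "gp u v t = (let L = hdist u v in
   (sinh ((1 - t) * L) / sinh L) *\<^sub>R u + (sinh (t * L) / sinh L) *\<^sub>R v)"

lemma seg_eq: "u \<noteq> v \<Longrightarrow> geodesic_segment u v = gp u v ` {0..1}"
  by (simp add: geodesic_segment_def gp_def Let_def)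

lemma hdist_pos: assumes "u \<in> H3" "v \<in> H3" "u \<noteq> v" shows "hdist u v > 0"
proof -
  have "mink u v \<ge> 1" using mink_ge1 assms by auto
  moreover have "mink u v \<noteq> 1" using mink_eq1[OF assms(1,2)] assms(3) by blast
  ultimately show ?thesis by (simp add: hdist_def)
qed

lemma cosh_le_exp_abs: "cosh (x::real) \<le> exp \<bar>x\<bar>"
proof -
  have "cosh x = cosh \<bar>x\<bar>" by simp
  also have "\<dots> \<le> cosh \<bar>x\<bar> + sinh \<bar>x\<bar>" by simp
  also have "\<dots> = exp \<bar>x\<bar>" by (rule cosh_plus_sinh)
  finally show ?thesis .
qed

lemma sinh_sum_bound:
  fixes U V :: real
  assumes "U \<ge> 0" "V \<ge> 0"
  shows "2 * sinh U * sinh V \<le> sinh (U + V)"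
proof -
  have "sinh U * sinh V \<le> sinh U * cosh V"
    using assms sinh_le_cosh_real[of V] by (intro mult_left_mono) auto
  moreover have "sinh U * sinh V \<le> cosh U * sinh V"
    using assms sinh_le_cosh_real[of U] by (intro mult_right_mono) auto
  ultimately show ?thesis by (simp add: sinh_add)
qed

lemma key_identity:
  fixes U V e :: real
  shows "cosh (U + e) * sinh V + cosh (V + e) * sinh U
     = cosh e * sinh (U + V) + 2 * sinh e * sinh U * sinh V"
  by (simp add: cosh_add sinh_add algebra_simps)

lemma sinh_pair_le:
  fixes L t :: real
  assumes "L > 0" "0 \<le> t" "t \<le> 1"
  shows "sinh ((1-t)*L) + sinh (t*L) \<le> sinh L"
proof -
  have n1: "(1-t)*L \<ge> 0" "t*L \<ge> 0" using assms by auto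
  hence s1: "sinh ((1-t)*L) \<ge> 0" "sinh (t*L) \<ge> 0" by auto
  have "sinh L = sinh ((1-t)*L + t*L)" by (simp add: algebra_simps)
  also have "\<dots> = sinh ((1-t)*L) * cosh (t*L) + cosh ((1-t)*L) * sinh (t*L)" by (rule sinh_add)
  also have "\<dots> \<ge> sinh ((1-t)*L) + sinh (t*L)"
  proof -
    have "sinh ((1-t)*L) * 1 \<le> sinh ((1-t)*L) * cosh (t*L)"
      using mult_left_mono[OF cosh_real_ge_1[of "t*L"] s1(1)] .
    moreover have "1 * sinh (t*L) \<le> cosh ((1-t)*L) * sinh (t*L)"
      using mult_right_mono[OF cosh_real_ge_1[of "(1-t)*L"] s1(2)] .
    ultimately show ?thesis by linarith
  qed
  finally show ?thesis .
qed

lemma sinh_pair_id: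
  fixes L s :: real
  shows "(sinh (L - s))^2 + 2 * sinh (L - s) * sinh s * cosh L + (sinh s)^2 = (sinh L)^2"
proof -
  have c: "(cosh L)^2 = (sinh L)^2 + 1" "(cosh s)^2 = (sinh s)^2 + 1" by (simp_all add: cosh_square_eq)
  show ?thesis unfolding sinh_diff using c by algebra
qed

lemma gp_props:
  assumes u: "u \<in> H3" and v: "v \<in> H3" and uv: "u \<noteq> v" and t: "0 \<le> t" "t \<le> 1"
  defines "L \<equiv> hdist u v"
  defines "\<alpha> \<equiv> sinh ((1 - t) * L) / sinh L"
  defines "\<beta> \<equiv> sinh (t * L) / sinh L"
  shows "gp u v t = \<alpha> *\<^sub>R u + \<beta> *\<^sub>R v" "\<alpha> \<ge> 0" "\<beta> \<ge> 0" "\<alpha> + \<beta> \<le> 1"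
    "gp u v t \<in> H3"
    "mink x (gp u v t) = (mink x u * sinh ((1 - t) * L) + mink x v * sinh (t * L)) / sinh L"
proof -
  have L: "L > 0" using hdist_pos[OF u v uv] by (simp add: L_def)
  have sL: "sinh L > 0" using L by simp
  show g: "gp u v t = \<alpha> *\<^sub>R u + \<beta> *\<^sub>R v" by (simp add: gp_def L_def \<alpha>_def \<beta>_def Let_def)
  show a0: "\<alpha> \<ge> 0" using t L sL by (simp add: \<alpha>_def)
  show b0: "\<beta> \<ge> 0" using t L sL by (simp add: \<beta>_def)
  show "\<alpha> + \<beta> \<le> 1" using sinh_pair_le[OF L t] sL
    by (simp add: \<alpha>_def \<beta>_def add_divide_distrib[symmetric])
  show "mink x (gp u v t) = (mink x u * sinh ((1 - t) * L) + mink x v * sinh (t * L)) / sinh L"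
    unfolding g by (simp add: mink_lin \<alpha>_def \<beta>_def add_divide_distrib algebra_simps)
  have muv: "mink u v = cosh L" using cosh_hdist[OF u v] by (simp add: L_def)
  have mm: "mink (gp u v t) (gp u v t) = 1"
  proof -
    define s where "s = t * L"
    have "(1 - t) * L = L - s" by (simp add: s_def algebra_simps)
    hence \<alpha>': "\<alpha> = sinh (L - s) / sinh L" by (simp add: \<alpha>_def)
    have \<beta>': "\<beta> = sinh s / sinh L" by (simp add: \<beta>_def s_def)
    have "mink (gp u v t) (gp u v t) = \<alpha>^2 + 2 * \<alpha> * \<beta> * cosh L + \<beta>^2"
      unfolding g using u v muv
      by (simp add: mink_lin mink_sym[of v u] H3_def power2_eq_square algebra_simps)
    also have "\<dots> = ((sinh (L - s))^2 + 2 * sinh (L - s) * sinh s * cosh L + (sinh s)^2) / (sinh L)^2"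
      unfolding \<alpha>' \<beta>' using sL by (simp add: field_simps power2_eq_square)
    also have "\<dots> = 1" using sinh_pair_id[of L s] sL by simp
    finally show ?thesis .
  qed
  have "fst (gp u v t) > 0"
  proof -
    have "\<alpha> \<noteq> 0 \<or> \<beta> \<noteq> 0" using mm g by auto
    hence "\<alpha> * fst u + \<beta> * fst v > 0" using a0 b0 H3_D[OF u] H3_D[OF v]
      by (smt (verit) mult_pos_pos mult_nonneg_nonneg)
    thus ?thesis using g by simp
  qed
  thus "gp u v t \<in> H3" using mm by (simp add: H3_def)
qed

lemma gp_0: "gp u v 0 = u" if "u \<in> H3" "v \<in> H3" "u \<noteq> v"
  using hdist_pos[OF that] by (simp add: gp_def Let_def)
lemma gp_1: "gp u v 1 = v" if "u \<in> H3" "v \<in> H3" "u \<noteq> v"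
  using hdist_pos[OF that] by (simp add: gp_def Let_def)

lemma gromov:
  assumes x: "x \<in> H3" and u: "u \<in> H3" and v: "v \<in> H3"
  shows "\<exists>c\<in>geodesic_segment u v. c \<in> H3 \<and>
    (\<exists>\<alpha> \<beta>. c = \<alpha> *\<^sub>R u + \<beta> *\<^sub>R v \<and> 0 \<le> \<alpha> \<and> 0 \<le> \<beta> \<and> \<alpha> + \<beta> \<le> 1) \<and>
    mink x c \<le> exp (\<bar>hdist x u + hdist x v - hdist u v\<bar> / 2)"
proof (cases "u = v")
  case True
  have "mink x u = cosh (hdist x u)" using cosh_hdist[OF x u] by simp
  also have "\<dots> \<le> exp \<bar>hdist x u\<bar>" by (rule cosh_le_exp_abs)
  also have "\<bar>hdist x u\<bar> = \<bar>hdist x u + hdist x v - hdist u v\<bar> / 2"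
    using True hdist_self[OF u] hdist_nonneg[OF x u] by simp
  finally have mk: "mink x u \<le> exp (\<bar>hdist x u + hdist x v - hdist u v\<bar> / 2)" .
  have "u \<in> geodesic_segment u v" using True by (simp add: geodesic_segment_def)
  moreover have "\<exists>\<alpha> \<beta>. u = \<alpha> *\<^sub>R u + \<beta> *\<^sub>R v \<and> 0 \<le> \<alpha> \<and> 0 \<le> \<beta> \<and> \<alpha> + \<beta> \<le> 1"
    by (rule exI[of _ 1], rule exI[of _ 0]) simp
  ultimately show ?thesis using u mk by blast
next
  case False
  define L where "L = hdist u v"
  define a where "a = hdist x u"
  define b where "b = hdist x v"
  define E where "E = a + b - L"
  have L: "L > 0" using hdist_pos[OF u v False] by (simp add: L_def)
  have a0: "a \<ge> 0" "b \<ge> 0" using hdist_nonneg x u v by (auto simp: a_def b_def)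
  have ma: "mink x u = cosh a" and mb: "mink x v = cosh b"
    using cosh_hdist x u v by (auto simp: a_def b_def)
  have mem: "gp u v t \<in> geodesic_segment u v" if "0 \<le> t" "t \<le> 1" for t
    using that seg_eq[OF False] by auto
  obtain t where t: "0 \<le> t" "t \<le> 1" and bound: "mink x (gp u v t) \<le> exp (\<bar>E\<bar> / 2)"
  proof (cases "\<bar>a - b\<bar> \<le> L")
    case True
    define \<tau> where "\<tau> = (L + a - b) / 2"
    define e where "e = E / 2"
    have \<tau>: "0 \<le> \<tau>" "\<tau> \<le> L" using True by (auto simp: \<tau>_def)
    define t where "t = \<tau> / L"
    have t: "0 \<le> t" "t \<le> 1" using \<tau> L by (auto simp: t_def)
    have tL: "t * L = \<tau>" "(1 - t) * L = L - \<tau>" using L by (auto simp: t_def field_simps)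
    have ae: "a = \<tau> + e" "b = (L - \<tau>) + e" by (auto simp: \<tau>_def e_def E_def field_simps)
    have "mink x (gp u v t) = (cosh (\<tau> + e) * sinh (L - \<tau>) + cosh ((L - \<tau>) + e) * sinh \<tau>) / sinh L"
      using gp_props(6)[OF u v False t, of x] unfolding L_def[symmetric] tL ma mb ae
      by (simp add: algebra_simps)
    also have "\<dots> = (cosh e * sinh L + 2 * sinh e * sinh \<tau> * sinh (L - \<tau>)) / sinh L"
      using key_identity[of \<tau> e "L - \<tau>"] by simp
    also have "\<dots> \<le> (cosh e * sinh L + \<bar>sinh e\<bar> * sinh L) / sinh L"
    proof -
      define S where "S = 2 * sinh \<tau> * sinh (L - \<tau>)"
      have S1: "S \<le> sinh L" using sinh_sum_bound[of \<tau> "L - \<tau>"] \<tau> by (simp add: S_def)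
      have S0: "S \<ge> 0" using \<tau> by (simp add: S_def)
      have "2 * sinh e * sinh \<tau> * sinh (L - \<tau>) = sinh e * S" by (simp add: S_def algebra_simps)
      also have "\<dots> \<le> \<bar>sinh e\<bar> * S" using S0 by (intro mult_right_mono) auto
      also have "\<dots> \<le> \<bar>sinh e\<bar> * sinh L" using S1 by (intro mult_left_mono) auto
      finally have "2 * sinh e * sinh \<tau> * sinh (L - \<tau>) \<le> \<bar>sinh e\<bar> * sinh L" .
      thus ?thesis using L by (intro divide_right_mono) auto
    qed
    also have "\<dots> = cosh e + \<bar>sinh e\<bar>" using L by (simp add: field_simps)
    also have "\<dots> = exp \<bar>e\<bar>" using cosh_plus_sinh[of "\<bar>e\<bar>"] by simp
    also have "\<dots> = exp (\<bar>E\<bar> / 2)" by (simp add: e_def)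
    finally show ?thesis using that t by blast
  next
    case False': False
    show ?thesis
    proof (cases "a - b > L")
      case True
      have "mink x (gp u v 1) = cosh b" using gp_1[OF u v False] mb by simp
      also have "\<dots> \<le> exp \<bar>b\<bar>" by (rule cosh_le_exp_abs)
      also have "\<dots> \<le> exp (\<bar>E\<bar> / 2)" using True a0 by (simp add: E_def)
      finally show ?thesis using that[of 1] by simp
    next
      case False
      hence "b - a > L" using False' by auto
      have "mink x (gp u v 0) = cosh a" using gp_0[OF u v \<open>u \<noteq> v\<close>] ma by simp
      also have "\<dots> \<le> exp \<bar>a\<bar>" by (rule cosh_le_exp_abs)
      also have "\<dots> \<le> exp (\<bar>E\<bar> / 2)" using \<open>b - a > L\<close> a0 by (simp add: E_def)
      finally show ?thesis using that[of 0] by simp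
    qed
  qed
  have c1: "gp u v t \<in> geodesic_segment u v" by (rule mem[OF t])
  note P = gp_props[OF u v False t]
  show ?thesis
  proof (rule bexI[OF _ c1], intro conjI)
    show "gp u v t \<in> H3" by (rule P(5))
    show "\<exists>\<alpha> \<beta>. gp u v t = \<alpha> *\<^sub>R u + \<beta> *\<^sub>R v \<and> 0 \<le> \<alpha> \<and> 0 \<le> \<beta> \<and> \<alpha> + \<beta> \<le> 1"
      using P(1-4) by blast
    show "mink x (gp u v t) \<le> exp (\<bar>hdist x u + hdist x v - hdist u v\<bar> / 2)"
      using bound by (simp add: E_def a_def b_def L_def)
  qed
qed


lemma sinh_exp: "sinh (x::real) = (exp x - exp (- x)) / 2"
  by (simp add: sinh_def field_simps)
lemma cosh_exp': "cosh (x::real) = (exp x + exp (- x)) / 2"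
  by (simp add: cosh_def field_simps)

lemma cosh_ge_half_sq: "cosh (u::real) \<ge> 1 + u^2/2" if "u \<ge> 0"
proof -
  have c: "cosh u = 1 + 2 * (sinh (u/2))^2"
  proof -
    have "cosh u = cosh (u/2 + u/2)" by simp
    also have "\<dots> = (cosh (u/2))^2 + (sinh (u/2))^2" by (simp only: cosh_add power2_eq_square)
    finally show ?thesis by (simp add: cosh_square_eq)
  qed
  have "u/2 \<le> sinh (u/2)" using real_le_x_sinh[of "u/2"] that by (simp add: sinh_exp exp_minus)
  hence "(u/2)^2 \<le> (sinh (u/2))^2" using that by (intro power_mono) auto
  thus ?thesis using c by (simp add: power_divide)
qed

lemma cosh_diff_le: "cosh u - cosh v \<le> (u - v) * exp u / 2" if "v \<le> (u::real)"
proof -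
  have e: "exp (- u) \<le> exp (- v)" using that by simp
  have a: "cosh u - cosh v \<le> (exp u - exp v) / 2" unfolding cosh_exp' using e by (simp add: field_simps)
  have e2: "1 - (u - v) \<le> exp (v - u)" using exp_ge_add_one_self[of "v - u"] by linarith
  have "exp u * (1 - (u - v)) \<le> exp u * exp (v - u)" using mult_left_mono[OF e2, of "exp u"] by simp
  also have "exp u * exp (v - u) = exp v" by (simp add: exp_add[symmetric])
  finally have "exp u - exp v \<le> (u - v) * exp u" by (simp add: algebra_simps)
  hence "(exp u - exp v) / 2 \<le> (u - v) * exp u / 2" by (rule divide_right_mono) simp
  thus ?thesis using a by (rule order_trans[rotated])
qed

lemma exp3_le: "exp (3::real) \<le> 27"
proof -
  have "exp (3::real) = exp (1 + 1 + 1)" by simp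
  also have "\<dots> = exp 1 * exp 1 * exp 1" by (simp only: exp_add)
  also have "\<dots> \<le> 3 * 3 * 3" using exp_le by (intro mult_mono) auto
  finally show ?thesis by simp
qed

lemma step_bound:
  fixes \<theta> u v :: real
  assumes th: "0 < \<theta>" "\<theta> \<le> 1/2" and u: "1/2 \<le> u" "u \<le> 3" and v: "0 \<le> v"
    and h: "(1 + \<theta>^2) * (cosh v - 1) + 1 \<le> cosh u"
  shows "v \<le> u - \<theta>^2 / 200"
proof -
  have "u^2 \<ge> (1/2)^2" using u by (intro power_mono) auto
  hence cu: "cosh u - 1 \<ge> 1/8" using cosh_ge_half_sq[of u] u by (simp add: power2_eq_square)
  have t2: "\<theta>^2 \<le> 1/4" using th power_mono[of \<theta> "1/2" 2] by (simp add: power2_eq_square)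
  have t2p: "\<theta>^2 > 0" using th by simp
  have vu: "v < u"
  proof (rule ccontr)
    assume "\<not> v < u"
    hence "cosh u \<le> cosh v" using u v by (simp add: cosh_real_nonneg_le_iff)
    hence "(1 + \<theta>^2) * (cosh v - 1) \<le> 1 * (cosh v - 1)" using h by simp
    hence "\<theta>^2 * (cosh v - 1) \<le> 0" by (simp add: algebra_simps)
    hence "cosh v - 1 \<le> 0" using t2p by (simp add: mult_le_0_iff)
    thus False using cu \<open>cosh u \<le> cosh v\<close> by simp
  qed
  have gap: "(1 + \<theta>^2) * (cosh u - cosh v) \<ge> \<theta>^2 / 8"
  proof -
    have "\<theta>^2 * (1/8) \<le> \<theta>^2 * (cosh u - 1)" using cu t2p by (intro mult_left_mono) auto
    also have "\<dots> = (1 + \<theta>^2) * cosh u - cosh u - \<theta>^2" by (simp add: algebra_simps)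
    also have "\<dots> \<le> (1 + \<theta>^2) * cosh u - ((1 + \<theta>^2) * (cosh v - 1) + 1) - \<theta>^2" using h by simp
    also have "\<dots> = (1 + \<theta>^2) * (cosh u - cosh v)" by (simp add: algebra_simps)
    finally show ?thesis by simp
  qed
  have gap2: "cosh u - cosh v \<ge> \<theta>^2 / 10"
  proof (rule ccontr)
    assume "\<not> ?thesis"
    hence lt: "cosh u - cosh v < \<theta>^2 / 10" by simp
    have "(1 + \<theta>^2) * (cosh u - cosh v) \<le> (5/4) * (cosh u - cosh v)"
    proof (cases "cosh u - cosh v \<ge> 0")
      case True thus ?thesis using t2 by (intro mult_right_mono) auto
    next
      case False
      hence "(1 + \<theta>^2) * (cosh u - cosh v) \<le> 0" using t2p by (simp add: mult_nonneg_nonpos)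
      thus ?thesis using gap t2p by simp
    qed
    also have "\<dots> < (5/4) * (\<theta>^2/10)" using lt by simp
    finally show False using gap by simp
  qed
  have "cosh u - cosh v \<le> (u - v) * exp u / 2" using cosh_diff_le vu by simp
  also have "\<dots> \<le> (u - v) * 27 / 2"
  proof -
    have e3: "exp u \<le> exp 3" using u by simp
    have "exp u \<le> 27" using e3 exp3_le by linarith
    hence "(u - v) * exp u \<le> (u - v) * 27" using vu by (intro mult_left_mono) auto
    thus ?thesis by (rule divide_right_mono) simp
  qed
  finally have "\<theta>^2 / 10 \<le> (u - v) * 27 / 2" using gap2 by simp
  hence "\<theta>^2 / 135 \<le> u - v" by simp
  thus ?thesis using t2p by linarith
qed

lemma height_gap:
  fixes \<theta> B :: real
  assumes th: "0 < \<theta>" "\<theta> \<le> 1/2" and B: "0 \<le> B" "B \<le> \<theta>"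
  shows "sqrt ((1 + 4*\<theta>^2) * (1 + B^2)) - 2*\<theta>*B \<ge> 1 + \<theta>^2/12"
proof -
  define K where "K = 1 + 2*\<theta>*B"
  have h1: "(1 + 4*\<theta>^2) * (1 + B^2) = K^2 + (2*\<theta> - B)^2"
    by (simp add: K_def power2_eq_square algebra_simps)
  have h2: "\<theta>^2 \<le> (2*\<theta> - B)^2" using th B by (intro power_mono) auto
  have t2: "\<theta>^2 \<le> 1/4" using th power_mono[of \<theta> "1/2" 2] by (simp add: power2_eq_square)
  have "\<theta> * B \<le> \<theta> * \<theta>" using th B by (intro mult_left_mono) auto
  hence h3: "K \<le> 3/2" using t2 by (simp add: K_def power2_eq_square)
  have h4: "(K + \<theta>^2/12)^2 = K^2 + K * \<theta>^2 / 6 + \<theta>^2 * \<theta>^2 / 144"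
    by (simp add: power2_eq_square algebra_simps)
  have h5: "K * \<theta>^2 / 6 \<le> (3/2) * \<theta>^2 / 6" using h3 by (intro divide_right_mono mult_right_mono) auto
  have h6: "\<theta>^2 * \<theta>^2 / 144 \<le> \<theta>^2 * (1/4) / 144" using t2 by (intro divide_right_mono mult_left_mono) auto
  have aux: "\<And>x y t w k::real. x \<le> 3/2 * t / 6 \<Longrightarrow> y \<le> t * (1/4) / 144 \<Longrightarrow> t \<le> w \<Longrightarrow> 0 \<le> t
     \<Longrightarrow> k + x + y \<le> k + w" by linarith
  have "(K + \<theta>^2/12)^2 \<le> (1 + 4*\<theta>^2) * (1 + B^2)" unfolding h1 h4
    by (rule aux[OF h5 h6 h2]) simp
  hence "K + \<theta>^2/12 \<le> sqrt ((1 + 4*\<theta>^2) * (1 + B^2))" by (simp add: real_le_rsqrt)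
  thus ?thesis by (simp add: K_def)
qed

lemma ln_lower_half: "x / 2 \<le> ln (1 + x)" if "0 \<le> x" "x \<le> (1/2::real)"
proof -
  have "x - x^2 \<le> ln (1 + x)" using ln_one_plus_pos_lower_bound[of x] that by simp
  moreover have "x^2 \<le> x / 2" using that by (simp add: power2_eq_square mult_left_mono[of x "1/2" x, simplified])
  ultimately show ?thesis by simp
qed

lemma step_ineq:
  fixes W W' c \<theta> :: real
  assumes "\<theta>^2 \<le> W" "\<theta>^2 \<le> W'" "c \<ge> 1"
  shows "sqrt ((1 + W) * (1 + W')) * c - sqrt (W * W') \<ge> (1 + \<theta>^2) * (c - 1) + 1"
proof -
  have W0: "W \<ge> 0" "W' \<ge> 0" using assms(1,2) by (smt (verit) zero_le_power2)+
  have "(1 + \<theta>^2) * (1 + \<theta>^2) \<le> (1 + W) * (1 + W')" using assms W0 by (intro mult_mono) auto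
  hence S1: "1 + \<theta>^2 \<le> sqrt ((1 + W) * (1 + W'))" by (simp add: real_le_rsqrt power2_eq_square)
  have am: "2 * sqrt (W * W') \<le> W + W'"
  proof -
    have "0 \<le> (sqrt W - sqrt W')^2" by simp
    thus ?thesis using W0 by (simp add: power2_eq_square algebra_simps real_sqrt_mult)
  qed
  have "(1 + sqrt (W * W'))^2 \<le> (1 + W) * (1 + W')"
    using am W0 by (simp add: power2_eq_square algebra_simps)
  hence S2: "1 + sqrt (W * W') \<le> sqrt ((1 + W) * (1 + W'))" by (simp add: real_le_rsqrt)
  have "sqrt ((1 + W) * (1 + W')) * (c - 1) \<ge> (1 + \<theta>^2) * (c - 1)"
    using S1 assms(3) by (intro mult_right_mono) auto
  moreover have "sqrt ((1 + W) * (1 + W')) * c - sqrt (W * W')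
      = sqrt ((1 + W) * (1 + W')) * (c - 1) + (sqrt ((1 + W) * (1 + W')) - sqrt (W * W'))"
    by (simp add: algebra_simps)
  ultimately show ?thesis using S2 by linarith
qed


lemma cont_mink: "continuous_on S \<gamma> \<Longrightarrow> continuous_on S (\<lambda>t. mink (\<gamma> t) z)"
  unfolding mink_def by (intro continuous_intros) auto

lemma qg_H3: "quasigeodesic \<delta> n \<gamma> \<Longrightarrow> t \<in> {0..n} \<Longrightarrow> \<gamma> t \<in> H3"
  by (auto simp: quasigeodesic_def)
lemma qg_lower: "quasigeodesic \<delta> n \<gamma> \<Longrightarrow> s \<in> {0..n} \<Longrightarrow> t \<in> {0..n} \<Longrightarrow>
    \<bar>s - t\<bar> / (1 + \<delta>) - \<delta> \<le> hdist (\<gamma> s) (\<gamma> t)"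
  by (auto simp: quasigeodesic_def)
lemma qg_upper: "quasigeodesic \<delta> n \<gamma> \<Longrightarrow> s \<in> {0..n} \<Longrightarrow> t \<in> {0..n} \<Longrightarrow>
    hdist (\<gamma> s) (\<gamma> t) \<le> (1 + \<delta>) * \<bar>s - t\<bar> + \<delta>"
  by (auto simp: quasigeodesic_def)

lemma div_1p_ge: "T \<ge> 0 \<Longrightarrow> 0 \<le> \<delta> \<Longrightarrow> T / (1 + \<delta>) \<ge> T * (1 - \<delta>)" for T \<delta> :: real
proof -
  assume a: "T \<ge> 0" "0 \<le> \<delta>"
  have "T * (1 - \<delta>) * (1 + \<delta>) \<le> T" using a by (simp add: algebra_simps mult_nonneg_nonneg)
  thus ?thesis using a by (simp add: field_simps)
qed

context frame begin

lemma excursion_long: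
  assumes q: "quasigeodesic \<delta> n \<gamma>" and dl: "0 < \<delta>" "\<delta> \<le> 1"
    and th: "0 < \<theta>" "\<theta> \<le> 1/2"
    and ts: "0 \<le> a" "a \<le> t0" "t0 \<le> b" "b \<le> n"
    and Wa: "Wf (\<gamma> a) \<le> \<theta>^2" and Wb: "Wf (\<gamma> b) \<le> \<theta>^2" and Wt: "Wf (\<gamma> t0) = 4*\<theta>^2"
  shows "\<theta>^2/24 \<le> \<delta>*(b-a) + 3/2*\<delta>"
proof -
  have ia: "a \<in> {0..n}" and ib: "b \<in> {0..n}" and it: "t0 \<in> {0..n}" using ts by auto
  define x where "x = \<gamma> t0"
  define u where "u = \<gamma> a"
  define v where "v = \<gamma> b"
  have H: "x \<in> H3" "u \<in> H3" "v \<in> H3" using qg_H3[OF q] ia ib it by (auto simp: x_def u_def v_def)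
  define T where "T = b - a"
  have T0: "T \<ge> 0" using ts by (simp add: T_def)
  define E where "E = hdist x u + hdist x v - hdist u v"
  have Eb: "\<bar>E\<bar> \<le> 2*\<delta>*T + 3*\<delta>"
  proof -
    have u1: "hdist x u \<le> (1+\<delta>)*(t0 - a) + \<delta>" using qg_upper[OF q it ia] ts by (simp add: x_def u_def)
    have u2: "hdist x v \<le> (1+\<delta>)*(b - t0) + \<delta>" using qg_upper[OF q it ib] ts by (simp add: x_def v_def)
    have u3: "hdist u v \<le> (1+\<delta>)*T + \<delta>" using qg_upper[OF q ia ib] ts by (simp add: T_def u_def v_def)
    have l1: "hdist x u \<ge> (t0 - a)/(1+\<delta>) - \<delta>" using qg_lower[OF q it ia] ts by (simp add: x_def u_def)
    have l2: "hdist x v \<ge> (b - t0)/(1+\<delta>) - \<delta>" using qg_lower[OF q it ib] ts by (simp add: x_def v_def)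
    have l3: "hdist u v \<ge> T/(1+\<delta>) - \<delta>" using qg_lower[OF q ia ib] ts by (simp add: T_def u_def v_def)
    have s: "(t0 - a)/(1+\<delta>) + (b - t0)/(1+\<delta>) = T/(1+\<delta>)" by (simp add: T_def add_divide_distrib[symmetric])
    have d: "T/(1+\<delta>) \<ge> T*(1-\<delta>)" using div_1p_ge T0 dl by simp
    have e: "(1+\<delta>)*(t0 - a) + (1+\<delta>)*(b - t0) = (1+\<delta>)*T" by (simp add: T_def algebra_simps)
    have "E \<le> 2*\<delta>*T + 3*\<delta>" using u1 u2 l3 d e unfolding E_def by (simp add: algebra_simps)
    moreover have "- E \<le> 2*\<delta>*T + 3*\<delta>" using l1 l2 u3 s d unfolding E_def by (simp add: algebra_simps)
    ultimately show ?thesis by linarith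
  qed
  obtain c \<alpha> \<beta> where cH: "c \<in> H3" and c: "c = \<alpha> *\<^sub>R u + \<beta> *\<^sub>R v" and ab: "0 \<le> \<alpha>" "0 \<le> \<beta>" "\<alpha> + \<beta> \<le> 1"
    and cm: "mink x c \<le> exp (\<bar>E\<bar> / 2)"
    using gromov[OF H] unfolding E_def by blast
  have up: "mink x c \<le> exp (\<delta>*T + 3/2*\<delta>)"
  proof -
    have "\<bar>E\<bar>/2 \<le> \<delta>*T + 3/2*\<delta>" using Eb by simp
    thus ?thesis using cm by (meson exp_le_cancel_iff order_trans)
  qed
  have Wc: "Wf c \<le> \<theta>^2"
  proof -
    define m where "m = mink (Yc u) (Yc v)"
    have "Wf c = \<alpha>^2 * Wf u + \<beta>^2 * Wf v - 2 * \<alpha> * \<beta> * m"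
      unfolding c Wf_def Yc_lin m_def
      by (simp add: mink_lin mink_sym[of "Yc v" "Yc u"] power2_eq_square algebra_simps)
    also have "\<dots> \<le> \<alpha>^2 * \<theta>^2 + \<beta>^2 * \<theta>^2 + 2 * \<alpha> * \<beta> * \<theta>^2"
    proof -
      have "\<bar>m\<bar> \<le> sqrt (Wf u * Wf v)" unfolding m_def by (rule Wcs)
      also have "\<dots> \<le> sqrt (\<theta>^2 * \<theta>^2)" using Wa Wb Wf_nonneg
        by (intro real_sqrt_le_mono mult_mono) (auto simp: u_def v_def)
      also have "\<dots> = \<bar>\<theta>^2\<bar>" by (rule real_sqrt_abs2)
      also have "\<dots> = \<theta>^2" by simp
      finally have "- m \<le> \<theta>^2" by simp
      hence "2 * \<alpha> * \<beta> * (- m) \<le> 2 * \<alpha> * \<beta> * \<theta>^2" using ab by (intro mult_left_mono) auto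
      moreover have "\<alpha>^2 * Wf u \<le> \<alpha>^2 * \<theta>^2" using Wa by (intro mult_left_mono) (auto simp: u_def)
      moreover have "\<beta>^2 * Wf v \<le> \<beta>^2 * \<theta>^2" using Wb by (intro mult_left_mono) (auto simp: v_def)
      ultimately show ?thesis by simp
    qed
    also have "\<dots> = (\<alpha> + \<beta>)^2 * \<theta>^2" by (simp add: power2_eq_square algebra_simps)
    also have "\<dots> \<le> 1 * \<theta>^2"
    proof -
      have "(\<alpha> + \<beta>)^2 \<le> 1^2" using ab by (intro power_mono) auto
      thus ?thesis by (intro mult_right_mono) auto
    qed
    finally show ?thesis by simp
  qed
  define B where "B = sqrt (Wf c)"
  have B: "0 \<le> B" "B \<le> \<theta>" "B^2 = Wf c" using Wc Wf_nonneg[of c] th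
    by (auto simp: B_def real_sqrt_le_iff intro: real_le_lsqrt)
  have lowc: "mink x c \<ge> 1 + \<theta>^2/12"
  proof -
    have "mink x c \<ge> sqrt (Qf x * Qf c) * cosh (sg x - sg c) - sqrt (Wf x * Wf c)"
      by (rule mink_lower[OF H(1) cH])
    moreover have "sqrt (Qf x * Qf c) * cosh (sg x - sg c) \<ge> sqrt (Qf x * Qf c) * 1"
      using cosh_real_ge_1 Qf_H3[OF H(1)] Qf_H3[OF cH] Wf_nonneg[of x] Wf_nonneg[of c] by (intro mult_left_mono) auto
    moreover have "Qf x = 1 + 4*\<theta>^2" using Qf_H3[OF H(1)] Wt by (simp add: x_def)
    moreover have "Qf c = 1 + B^2" using Qf_H3[OF cH] B by simp
    moreover have "sqrt (Wf x * Wf c) = 2*\<theta>*B"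
      using Wt th B by (simp add: x_def real_sqrt_mult B_def)
    ultimately have "mink x c \<ge> sqrt ((1 + 4*\<theta>^2) * (1 + B^2)) - 2*\<theta>*B" by simp
    moreover have "sqrt ((1 + 4*\<theta>^2) * (1 + B^2)) - 2*\<theta>*B \<ge> 1 + \<theta>^2/12"
      by (rule height_gap[OF th B(1,2)])
    ultimately show ?thesis by linarith
  qed
  have "1 + \<theta>^2/12 \<le> exp (\<delta>*T + 3/2*\<delta>)" using lowc up by linarith
  hence "ln (1 + \<theta>^2/12) \<le> \<delta>*T + 3/2*\<delta>"
    by (metis add_pos_nonneg ln_exp ln_le_cancel_iff zero_le_power2 divide_nonneg_pos zero_less_one
        exp_gt_zero zero_less_numeral)
  moreover have "\<theta>^2/12/2 \<le> ln (1 + \<theta>^2/12)"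
  proof (rule ln_lower_half)
    have "\<theta>^2 \<le> (1/2)^2" using th by (intro power_mono) auto
    thus "\<theta>^2/12 \<le> 1/2" by (simp add: power2_eq_square)
  qed simp
  ultimately show ?thesis by (simp add: T_def)
qed

end


context frame begin

lemma sg_cosh: "cosh (sg x - sg z) = cosh \<bar>sg z - sg x\<bar>"
  by (metis cosh_minus cosh_real_abs minus_diff_eq)

lemma excursion_short:
  assumes q: "quasigeodesic \<delta> n \<gamma>" and dl: "0 < \<delta>" "\<delta> \<le> \<theta>^2/2000"
    and th: "0 < \<theta>" "\<theta> \<le> 1/2"
    and ab: "0 \<le> a" "a + 1 \<le> b" "b \<le> n"
    and Wa: "Wf (\<gamma> a) = \<theta>^2" and Wb: "Wf (\<gamma> b) = \<theta>^2"
    and Wall: "\<forall>s\<in>{a..b}. \<theta>^2 \<le> Wf (\<gamma> s)"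
  shows "(b - a) * \<theta>^2 \<le> 2400"
proof -
  define T where "T = b - a"
  have T1: "T \<ge> 1" using ab by (simp add: T_def)
  have t2: "\<theta>^2 \<le> 1/4" using th power_mono[of \<theta> "1/2" 2] by (simp add: power2_eq_square)
  have d1: "\<delta> \<le> 1/8000" using dl t2 by simp
  define k where "k = nat \<lfloor>T\<rfloor>"
  have k1: "real k \<ge> 1" "real k \<le> T" using T1 by (auto simp: k_def)
  have k2: "real k \<ge> T/2"
  proof (cases "T < 2")
    case True
    hence "\<lfloor>T\<rfloor> = 1" using T1 by (simp add: floor_eq_iff)
    thus ?thesis using True by (simp add: k_def)
  next
    case False
    have "real k > T - 1" using T1 by (simp add: k_def)
    thus ?thesis using False by simp
  qed
  define \<sigma> where "\<sigma> = T / real k"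
  have sig: "1 \<le> \<sigma>" "\<sigma> \<le> 2" "real k * \<sigma> = T" using k1 k2 by (auto simp: \<sigma>_def field_simps)
  define ti where "ti i = a + real i * \<sigma>" for i :: nat
  have ti_in: "ti i \<in> {0..n}" "ti i \<in> {a..b}" if "i \<le> k" for i
  proof -
    have "real i * \<sigma> \<le> real k * \<sigma>" using that sig by (intro mult_right_mono) auto
    moreover have "real i * \<sigma> \<ge> 0" using sig by simp
    ultimately show "ti i \<in> {a..b}" using sig by (simp add: ti_def T_def)
    thus "ti i \<in> {0..n}" using ab by simp
  qed
  have ti0: "ti 0 = a" and tik: "ti k = b" using sig by (simp_all add: ti_def T_def)
  have tis: "ti (Suc i) - ti i = \<sigma>" for i by (simp add: ti_def algebra_simps)
  define s where "s i = sg (\<gamma> (ti i))" for i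
  define dd where "dd i = hdist (\<gamma> (ti i)) (\<gamma> (ti (Suc i)))" for i
  have step: "\<bar>s (Suc i) - s i\<bar> \<le> (1 + \<delta>) * \<sigma> + \<delta> - \<theta>^2/200" if "i < k" for i
  proof -
    have i1: "ti i \<in> {0..n}" "ti (Suc i) \<in> {0..n}" using ti_in that by auto
    have i2: "ti i \<in> {a..b}" "ti (Suc i) \<in> {a..b}" using ti_in that by auto
    have H: "\<gamma> (ti i) \<in> H3" "\<gamma> (ti (Suc i)) \<in> H3" using qg_H3[OF q] i1 by auto
    have up: "dd i \<le> (1 + \<delta>) * \<sigma> + \<delta>"
      using qg_upper[OF q i1] tis[of i] sig by (simp add: dd_def)
    have lo: "dd i \<ge> \<sigma> / (1 + \<delta>) - \<delta>"
      using qg_lower[OF q i1] tis[of i] sig by (simp add: dd_def)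
    define r where "r = \<sigma> / (1 + \<delta>)"
    define r2 where "r2 = \<sigma> * (1 - \<delta>)"
    have "r \<ge> r2" using div_1p_ge sig dl by (simp add: r_def r2_def)
    moreover have "r2 \<ge> 1 - \<delta>" unfolding r2_def using mult_right_mono[of 1 \<sigma> "1-\<delta>"] sig d1 by simp
    moreover have "dd i \<ge> r - \<delta>" using lo by (simp add: r_def)
    ultimately have dlo: "dd i \<ge> 1/2" using d1 by linarith
    define p where "p = (1 + \<delta>) * \<sigma>"
    have "p \<le> (1 + 1/8000) * 2" unfolding p_def using sig d1 dl by (intro mult_mono) auto
    moreover have "dd i \<le> p + \<delta>" using up by (simp add: p_def)
    ultimately have dup: "dd i \<le> 3" using d1 by simp
    define v where "v = \<bar>s (Suc i) - s i\<bar>"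
    have W: "\<theta>^2 \<le> Wf (\<gamma> (ti i))" "\<theta>^2 \<le> Wf (\<gamma> (ti (Suc i)))" using Wall i2 by auto
    have cv: "cosh (sg (\<gamma> (ti i)) - sg (\<gamma> (ti (Suc i)))) = cosh v"
      unfolding v_def s_def by (rule sg_cosh)
    have "cosh (dd i) = mink (\<gamma> (ti i)) (\<gamma> (ti (Suc i)))" using cosh_hdist[OF H] by (simp add: dd_def)
    also have "\<dots> \<ge> sqrt (Qf (\<gamma> (ti i)) * Qf (\<gamma> (ti (Suc i)))) * cosh v
        - sqrt (Wf (\<gamma> (ti i)) * Wf (\<gamma> (ti (Suc i))))"
      using mink_lower[OF H] unfolding cv .
    finally have "cosh (dd i) \<ge> sqrt ((1 + Wf (\<gamma> (ti i))) * (1 + Wf (\<gamma> (ti (Suc i))))) * cosh v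
        - sqrt (Wf (\<gamma> (ti i)) * Wf (\<gamma> (ti (Suc i))))"
      using Qf_H3[OF H(1)] Qf_H3[OF H(2)] by simp
    moreover have "sqrt ((1 + Wf (\<gamma> (ti i))) * (1 + Wf (\<gamma> (ti (Suc i))))) * cosh v
        - sqrt (Wf (\<gamma> (ti i)) * Wf (\<gamma> (ti (Suc i)))) \<ge> (1 + \<theta>^2) * (cosh v - 1) + 1"
      by (rule step_ineq[OF W cosh_real_ge_1])
    ultimately have "(1 + \<theta>^2) * (cosh v - 1) + 1 \<le> cosh (dd i)" by linarith
    hence "v \<le> dd i - \<theta>^2/200" using step_bound[OF th dlo dup] by (simp add: v_def)
    thus ?thesis using up by (simp add: v_def)
  qed
  have sumb: "\<bar>s k - s 0\<bar> \<le> real k * ((1 + \<delta>) * \<sigma> + \<delta> - \<theta>^2/200)"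
  proof -
    have "s k - s 0 = (\<Sum>i<k. s (Suc i) - s i)" by (simp add: sum_lessThan_telescope)
    hence "\<bar>s k - s 0\<bar> \<le> (\<Sum>i<k. \<bar>s (Suc i) - s i\<bar>)" by (simp add: sum_abs)
    also have "\<dots> \<le> (\<Sum>i<k. (1 + \<delta>) * \<sigma> + \<delta> - \<theta>^2/200)" using step by (intro sum_mono) auto
    also have "\<dots> = real k * ((1 + \<delta>) * \<sigma> + \<delta> - \<theta>^2/200)" by simp
    finally show ?thesis .
  qed
  define \<Delta> where "\<Delta> = s k - s 0"
  have ia: "a \<in> {0..n}" and ib: "b \<in> {0..n}" using ab by auto
  have Ha: "\<gamma> a \<in> H3" and Hb: "\<gamma> b \<in> H3" using qg_H3[OF q] ia ib by auto
  define D where "D = hdist (\<gamma> a) (\<gamma> b)"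
  have Dlo: "D \<ge> T / (1 + \<delta>) - \<delta>" using qg_lower[OF q ia ib] ab by (simp add: D_def T_def)
  have Dup: "D \<le> \<bar>\<Delta>\<bar> + 2"
  proof -
    have "cosh D = mink (\<gamma> a) (\<gamma> b)" using cosh_hdist[OF Ha Hb] by (simp add: D_def)
    also have "\<dots> \<le> sqrt (Qf (\<gamma> a) * Qf (\<gamma> b)) * cosh (sg (\<gamma> a) - sg (\<gamma> b))
         + sqrt (Wf (\<gamma> a) * Wf (\<gamma> b))" by (rule mink_upper[OF Ha Hb])
    also have "\<dots> = (1 + \<theta>^2) * cosh \<Delta> + \<theta>^2"
    proof -
      have cd: "cosh (sg (\<gamma> a) - sg (\<gamma> b)) = cosh \<Delta>"
        unfolding \<Delta>_def s_def ti0 tik by (metis cosh_minus minus_diff_eq)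
      have sq1: "sqrt (Qf (\<gamma> a) * Qf (\<gamma> b)) = 1 + \<theta>^2"
        using Qf_H3[OF Ha] Qf_H3[OF Hb] Wa Wb by (simp add: real_sqrt_abs2[of "1 + \<theta>^2", simplified])
      have sq2: "sqrt (Wf (\<gamma> a) * Wf (\<gamma> b)) = \<theta>^2"
        using Wa Wb by (simp add: real_sqrt_abs2[of "\<theta>^2", simplified])
      show ?thesis unfolding cd sq1 sq2 ..
    qed
    also have "\<dots> \<le> (1 + \<theta>^2) * cosh \<Delta> + \<theta>^2 * cosh \<Delta>"
      using cosh_real_ge_1[of \<Delta>] th by (simp add: mult_le_cancel_left1)
    also have "\<dots> = (1 + 2*\<theta>^2) * cosh \<Delta>" by (simp add: algebra_simps)
    also have "\<dots> \<le> (3/2) * exp \<bar>\<Delta>\<bar>"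
      using cosh_le_exp_abs[of \<Delta>] t2 by (intro mult_mono) auto
    finally have c1: "cosh D \<le> (3/2) * exp \<bar>\<Delta>\<bar>" .
    have "exp D / 2 \<le> cosh D" by (simp add: cosh_exp')
    hence "exp D \<le> 3 * exp \<bar>\<Delta>\<bar>" using c1 by simp
    also have "\<dots> \<le> exp 2 * exp \<bar>\<Delta>\<bar>"
      using exp_ge_add_one_self[of "2::real"] by (intro mult_right_mono) auto
    also have "\<dots> = exp (\<bar>\<Delta>\<bar> + 2)" by (simp add: exp_add)
    finally show ?thesis by simp
  qed
  have A1: "T / (1 + \<delta>) \<ge> T * (1 - \<delta>)" using div_1p_ge T1 dl by simp
  have A2: "real k * ((1 + \<delta>) * \<sigma> + \<delta> - \<theta>^2/200) = (1 + \<delta>) * T + real k * (\<delta> - \<theta>^2/200)"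
    using sig by (simp add: algebra_simps)
  have A3: "real k * (\<delta> - \<theta>^2/200) \<le> (T/2) * (\<delta> - \<theta>^2/200)"
    using k2 dl th by (intro mult_right_mono_neg) auto
  have A4: "T * \<delta> \<le> T * (\<theta>^2/2000)" using dl T1 by (intro mult_left_mono) auto
  define X where "X = real k * (\<delta> - \<theta>^2/200)"
  define Z where "Z = T * \<delta>"
  define U where "U = T * \<theta>^2"
  have e1: "T * (1 - \<delta>) = T - Z" by (simp add: Z_def algebra_simps)
  have e2: "(1 + \<delta>) * T = T + Z" by (simp add: Z_def algebra_simps)
  have e3: "(T/2) * (\<delta> - \<theta>^2/200) = Z/2 - U/400" by (simp add: Z_def U_def algebra_simps)
  have B1: "T - Z - \<delta> \<le> \<bar>\<Delta>\<bar> + 2" using Dlo Dup A1 e1 by linarith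
  have B2: "\<bar>\<Delta>\<bar> \<le> T + Z + X" using sumb A2 e2 unfolding \<Delta>_def X_def by linarith
  have B3: "X \<le> Z/2 - U/400" using A3 e3 unfolding X_def by linarith
  have B4: "Z \<le> U/2000" using A4 by (simp add: Z_def U_def)
  have "U \<le> 2400" using B1 B2 B3 B4 d1 by linarith
  thus ?thesis by (simp add: U_def T_def)
qed

end


context frame begin

lemma W_cont:
  assumes q: "quasigeodesic \<delta> n \<gamma>"
  shows "continuous_on {0..n} (\<lambda>s. Wf (\<gamma> s))"
proof -
  have c: "continuous_on {0..n} \<gamma>" using q by (simp add: quasigeodesic_def)
  have "continuous_on {0..n} (\<lambda>s. (mink (\<gamma> s) e0)^2 - (- mink (\<gamma> s) e1)^2 - 1)"
    by (intro continuous_intros cont_mink[OF c])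
  moreover have "(mink (\<gamma> s) e0)^2 - (- mink (\<gamma> s) e1)^2 - 1 = Wf (\<gamma> s)" if "s \<in> {0..n}" for s
    using Qf_H3[OF qg_H3[OF q that]] by (simp add: Qf_def X0_def X1_def)
  ultimately show ?thesis by (rule continuous_on_eq)
qed

lemma sg_cont:
  assumes q: "quasigeodesic \<delta> n \<gamma>"
  shows "continuous_on {0..n} (\<lambda>s. sg (\<gamma> s))"
proof -
  have c: "continuous_on {0..n} \<gamma>" using q by (simp add: quasigeodesic_def)
  have pos: "mink (\<gamma> s) e0 - mink (\<gamma> s) e1 > 0" "mink (\<gamma> s) e0 + mink (\<gamma> s) e1 > 0"
    if "s \<in> {0..n}" for s
    using PN_pos[OF qg_H3[OF q that]] by (auto simp: Pf_def Nf_def X0_def X1_def)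
  have "continuous_on {0..n} (\<lambda>s. (ln (mink (\<gamma> s) e0 - mink (\<gamma> s) e1) - ln (mink (\<gamma> s) e0 + mink (\<gamma> s) e1)) / 2)"
    using pos by (intro continuous_intros cont_mink[OF c]) (auto simp: less_imp_neq[symmetric])
  moreover have "(ln (mink (\<gamma> s) e0 - mink (\<gamma> s) e1) - ln (mink (\<gamma> s) e0 + mink (\<gamma> s) e1)) / 2 = sg (\<gamma> s)"
    for s by (simp add: sg_def Pf_def Nf_def X0_def X1_def)
  ultimately show ?thesis by (rule continuous_on_eq)
qed

lemma polar:
  assumes x: "x \<in> H3"
  shows "X0 x = sqrt (Qf x) * cosh (sg x)" "X1 x = sqrt (Qf x) * sinh (sg x)"
proof -
  have P: "Pf x > 0" "Nf x > 0" using PN_pos[OF x] by auto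
  define a where "a = sqrt (Pf x)"
  define b where "b = sqrt (Nf x)"
  have pos: "a > 0" "b > 0" using P by (auto simp: a_def b_def)
  have sq: "a^2 = Pf x" "b^2 = Nf x" using P by (auto simp: a_def b_def)
  have e1': "exp (sg x) = a / b"
    using P by (simp add: sg_def exp_diff sqrt_exp_ln[symmetric] a_def b_def diff_divide_distrib)
  have e2': "exp (- sg x) = b / a" using pos by (simp only: exp_minus e1') simp
  have Q: "sqrt (Qf x) = a * b" using P by (simp add: PN_prod[symmetric] real_sqrt_mult a_def b_def)
  have "sqrt (Qf x) * cosh (sg x) = (a^2 + b^2) / 2"
    unfolding cosh_exp e1' e2' Q using pos by (simp add: field_simps power2_eq_square)
  also have "\<dots> = X0 x" unfolding sq by (simp add: Pf_def Nf_def)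
  finally show "X0 x = sqrt (Qf x) * cosh (sg x)" by simp
  have "sqrt (Qf x) * sinh (sg x) = (a^2 - b^2) / 2"
    unfolding sinh_exp e1' e2' Q using pos by (simp add: field_simps power2_eq_square)
  also have "\<dots> = X1 x" unfolding sq by (simp add: Pf_def Nf_def)
  finally show "X1 x = sqrt (Qf x) * sinh (sg x)" by simp
qed

lemma mink_seg:
  assumes x: "x \<in> H3"
  shows "mink x (cosh \<tau> *\<^sub>R e0 + sinh \<tau> *\<^sub>R e1) = sqrt (Qf x) * cosh (sg x - \<tau>)"
proof -
  have "mink x (cosh \<tau> *\<^sub>R e0 + sinh \<tau> *\<^sub>R e1) = X0 x * cosh \<tau> - X1 x * sinh \<tau>"
    by (simp add: mink_lin X0_def X1_def)
  also have "\<dots> = sqrt (Qf x) * (cosh (sg x) * cosh \<tau> - sinh (sg x) * sinh \<tau>)"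
    using polar[OF x] by (simp add: algebra_simps)
  also have "\<dots> = sqrt (Qf x) * cosh (sg x - \<tau>)" by (simp add: cosh_diff)
  finally show ?thesis .
qed

lemma close:
  assumes x: "x \<in> H3" and W: "Wf x < 4*\<theta>^2" and th: "0 < \<theta>" "\<theta> \<le> 1/2"
  shows "hdist x (cosh (sg x) *\<^sub>R e0 + sinh (sg x) *\<^sub>R e1) < 3*\<theta>"
proof -
  define W where "W = Wf x"
  have W0: "W \<ge> 0" using Wf_nonneg by (simp add: W_def)
  have m: "mink x (cosh (sg x) *\<^sub>R e0 + sinh (sg x) *\<^sub>R e1) = sqrt (1 + W)"
    using mink_seg[OF x, of "sg x"] Qf_H3[OF x] by (simp add: W_def)
  have m1: "sqrt (1 + W) \<ge> 1" using W0 by simp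
  have "hdist x (cosh (sg x) *\<^sub>R e0 + sinh (sg x) *\<^sub>R e1) = ln (sqrt (1 + W) + sqrt ((sqrt (1 + W))^2 - 1))"
    unfolding hdist_def m using arcosh_real_def[OF m1] by simp
  also have "\<dots> = ln (sqrt (1 + W) + sqrt W)" using W0 by simp
  also have "\<dots> \<le> sqrt (1 + W) + sqrt W - 1"
    using W0 by (intro ln_le_minus_one) (smt (verit) real_sqrt_ge_zero m1)
  also have "\<dots> < 3*\<theta>"
  proof -
    have "sqrt (1 + W) \<le> sqrt ((1 + W/2)^2)" using W0 by (intro real_sqrt_le_mono) (simp add: power2_eq_square algebra_simps)
    also have "\<dots> = 1 + W/2" using W0 by simp
    finally have s1: "sqrt (1 + W) \<le> 1 + W/2" .
    have "sqrt W < sqrt ((2*\<theta>)^2)" using W by (intro real_sqrt_less_mono) (simp add: W_def power_mult_distrib)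
    also have "\<dots> = 2*\<theta>" using th by (subst real_sqrt_abs) simp
    finally have s2: "sqrt W < 2*\<theta>" .
    have "\<theta> * \<theta> \<le> \<theta> * (1/2)" using th by (intro mult_left_mono) auto
    hence "2*\<theta>^2 \<le> \<theta>" by (simp add: power2_eq_square)
    thus ?thesis using s1 s2 W by (simp add: W_def)
  qed
  finally show ?thesis .
qed

lemma no_high:
  assumes q: "quasigeodesic \<delta> n \<gamma>" and n: "0 \<le> n" and th: "0 < \<theta>" "\<theta> \<le> 1/100000"
    and dl: "\<delta> = \<theta>^5" and W0: "Wf (\<gamma> 0) = 0" and Wn: "Wf (\<gamma> n) = 0" and t: "t \<in> {0..n}"
  shows "Wf (\<gamma> t) < 4*\<theta>^2"
proof (rule ccontr)
  assume "\<not> ?thesis"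
  hence Wt: "4*\<theta>^2 \<le> Wf (\<gamma> t)" by simp
  define w where "w s = Wf (\<gamma> s)" for s
  have wc: "continuous_on {0..n} w" using W_cont[OF q] by (simp add: w_def)
  have tp: "\<theta>^2 > 0" using th by simp
  have wc': "continuous_on {a..b} w" if "0 \<le> a" "b \<le> n" for a b
    using continuous_on_subset[OF wc, of "{a..b}"] that by auto
  obtain t0 where t0: "0 \<le> t0" "t0 \<le> t" "w t0 = 4*\<theta>^2"
    using IVT'[of w 0 "4*\<theta>^2" t] W0 Wt t wc'[of 0 t] by (auto simp: w_def)
  have t0n: "t0 \<le> n" using t0 t by simp
  define A where "A = {s \<in> {0..t0}. w s \<le> \<theta>^2}"
  have Acl: "closed A" unfolding A_def
    by (rule continuous_on_closed_Collect_le) (auto intro: wc'[of 0 t0] t0n continuous_on_const)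
  have A0: "0 \<in> A" using t0 W0 tp by (simp add: A_def w_def)
  have Abd: "bdd_above A" by (rule bdd_aboveI[of _ t0]) (auto simp: A_def)
  define a where "a = Sup A"
  have aA: "a \<in> A" using closed_contains_Sup[OF _ Abd Acl] A0 by (auto simp: a_def)
  have aup: "s \<le> a" if "s \<in> A" for s using cSup_upper[OF that Abd] by (simp add: a_def)
  have a1: "0 \<le> a" "a \<le> t0" "w a \<le> \<theta>^2" using aA by (auto simp: A_def)
  have wa: "w a = \<theta>^2"
  proof -
    obtain s where s: "a \<le> s" "s \<le> t0" "w s = \<theta>^2"
      using IVT'[of w a "\<theta>^2" t0] a1 t0 tp wc'[of a t0] t0n by auto
    hence "s \<in> A" using a1 by (auto simp: A_def)
    hence "s = a" using aup s by fastforce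
    thus ?thesis using s by simp
  qed
  have abv: "\<theta>^2 \<le> w s" if "a \<le> s" "s \<le> t0" for s
  proof (rule ccontr)
    assume "\<not> ?thesis"
    hence "s \<in> A" using that a1 by (auto simp: A_def)
    hence "s = a" using aup that by fastforce
    thus False using wa \<open>\<not> \<theta>^2 \<le> w s\<close> by simp
  qed
  define B where "B = {s \<in> {t0..n}. w s \<le> \<theta>^2}"
  have Bcl: "closed B" unfolding B_def
    by (rule continuous_on_closed_Collect_le) (auto intro: wc'[of t0 n] t0 continuous_on_const)
  have B0: "n \<in> B" using t0n Wn tp by (simp add: B_def w_def)
  have Bbd: "bdd_below B" by (rule bdd_belowI[of _ t0]) (auto simp: B_def)
  define b where "b = Inf B"
  have bB: "b \<in> B" using closed_contains_Inf[OF _ Bbd Bcl] B0 by (auto simp: b_def)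
  have blo: "b \<le> s" if "s \<in> B" for s using cInf_lower[OF that Bbd] by (simp add: b_def)
  have b1: "t0 \<le> b" "b \<le> n" "w b \<le> \<theta>^2" using bB by (auto simp: B_def)
  have wb: "w b = \<theta>^2"
  proof -
    obtain s where s: "t0 \<le> s" "s \<le> b" "w s = \<theta>^2"
      using IVT2'[of w b "\<theta>^2" t0] b1 t0 tp wc'[of t0 b] by auto
    hence "s \<in> B" using b1 by (auto simp: B_def)
    hence "s = b" using blo s by fastforce
    thus ?thesis using s by simp
  qed
  have bel: "\<theta>^2 \<le> w s" if "t0 \<le> s" "s \<le> b" for s
  proof (rule ccontr)
    assume "\<not> ?thesis"
    hence "s \<in> B" using that b1 by (auto simp: B_def)
    hence "s = b" using blo that by fastforce
    thus False using wb \<open>\<not> \<theta>^2 \<le> w s\<close> by simp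
  qed
  have Wall: "\<forall>s\<in>{a..b}. \<theta>^2 \<le> Wf (\<gamma> s)"
  proof
    fix s assume "s \<in> {a..b}"
    thus "\<theta>^2 \<le> Wf (\<gamma> s)" using abv bel by (cases "s \<le> t0") (auto simp: w_def)
  qed
  have th3: "\<theta>^3 \<le> \<theta>^2 * (1/100000)"
  proof -
    have "\<theta>^2 * \<theta> \<le> \<theta>^2 * (1/100000)" using th by (intro mult_left_mono) auto
    thus ?thesis by (simp add: power3_eq_cube power2_eq_square)
  qed
  have th3': "\<theta>^3 \<le> 1/1000000000000000"
  proof -
    have "\<theta>^3 \<le> (1/100000)^3" using th by (intro power_mono) auto
    thus ?thesis by (simp add: power_divide)
  qed
  have th5: "\<theta>^5 = \<theta>^2 * \<theta>^3" by (simp add: power_add[symmetric])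
  have th5b: "\<theta>^5 \<le> \<theta>^2 * (1/1000000000000000)" unfolding th5 using th3' tp by (intro mult_left_mono) auto
  have dpos: "0 < \<delta>" using th by (simp add: dl)
  have d1: "\<delta> \<le> 1" unfolding dl using th by (intro power_le_one) auto
  have th2: "\<theta> \<le> 1/2" using th by simp
  have wa': "Wf (\<gamma> a) = \<theta>^2" using wa by (simp add: w_def)
  have wb': "Wf (\<gamma> b) = \<theta>^2" using wb by (simp add: w_def)
  have wt': "Wf (\<gamma> t0) = 4*\<theta>^2" using t0 by (simp add: w_def)
  have L1: "\<theta>^2/24 \<le> \<delta>*(b-a) + 3/2*\<delta>"
    using excursion_long[where \<delta>=\<delta> and n=n and \<gamma>=\<gamma> and \<theta>=\<theta> and a=a and b=b]
      q dpos d1 th(1) th2 a1(1) a1(2) b1(1) b1(2) wa' wb' wt' by auto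
  have ab1: "a + 1 \<le> b"
  proof (rule ccontr)
    assume "\<not> ?thesis"
    hence "b - a \<le> 1" by simp
    hence "\<delta>*(b-a) \<le> \<delta>*1" using dpos by (intro mult_left_mono) auto
    hence "\<theta>^2/24 \<le> 5/2 * \<theta>^5" using L1 by (simp add: dl)
    thus False using th5b tp by simp
  qed
  have dsm: "\<delta> \<le> \<theta>^2/2000" unfolding dl using th5b tp by linarith
  have S: "(b - a) * \<theta>^2 \<le> 2400"
    using excursion_short[where \<delta>=\<delta> and n=n and \<gamma>=\<gamma> and \<theta>=\<theta> and a=a and b=b] q dpos dsm th(1) th2 a1(1) ab1 b1(2) wa' wb' Wall
    by blast
  define T where "T = b - a"
  have "\<theta>^5 * T = \<theta>^3 * (T * \<theta>^2)" by (simp only: th5 mult_ac)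
  also have "\<dots> \<le> \<theta>^3 * 2400" using S th by (intro mult_left_mono) (auto simp: T_def)
  finally have P1: "\<theta>^5 * T \<le> \<theta>^3 * 2400" .
  have "\<theta>^2/24 \<le> \<theta>^5 * T + 3/2 * \<theta>^5" using L1 by (simp add: dl T_def algebra_simps)
  thus False using P1 th3 th5b tp by linarith
qed

end


lemma final_arith:
  fixes \<theta> \<delta> r :: real
  assumes th: "0 < \<theta>" "\<theta> \<le> 1/100000" and dl: "\<delta> = \<theta>^5"
    and r: "r < (1 + \<delta>) * (3*\<theta> + \<delta>)" "0 \<le> r"
  shows "(1 + \<delta>) * r + \<delta> < 5*\<theta>"
proof -
  have d0: "0 \<le> \<delta>" using th by (simp add: dl)
  have dth: "\<delta> \<le> \<theta> / 100"
  proof -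
    have "\<theta>^4 \<le> (1/100000)^4" using th by (intro power_mono) auto
    hence "\<theta>^4 \<le> 1/100" by (simp add: power_divide)
    hence "\<theta> * \<theta>^4 \<le> \<theta> * (1/100)" using th by (intro mult_left_mono) auto
    moreover have "\<theta>^5 = \<theta> * \<theta>^4" by (simp add: power_Suc[symmetric])
    ultimately show ?thesis by (simp add: dl)
  qed
  have d1: "\<delta> \<le> 1/100" using dth th by simp
  define X where "X = (1 + \<delta>) * (3*\<theta> + \<delta>)"
  have X1: "X = 3*\<theta> + \<delta> + 3*(\<theta>*\<delta>) + \<delta>*\<delta>" by (simp add: X_def algebra_simps)
  have p1: "\<theta>*\<delta> \<le> \<theta> * (1/100)" using th d1 by (intro mult_left_mono) auto
  have p2: "\<delta>*\<delta> \<le> \<delta> * (1/100)" using d0 d1 by (intro mult_left_mono) auto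
  have Xb: "X \<le> 4*\<theta>" using X1 p1 p2 dth th by linarith
  have "(1 + \<delta>) * r = r + \<delta> * r" by (simp add: algebra_simps)
  moreover have "\<delta> * r \<le> (1/100) * r" using d1 r by (intro mult_right_mono) auto
  moreover have "r < X" using r by (simp add: X_def)
  ultimately show ?thesis using Xb dth th r by linarith
qed

lemma final_case:
  assumes q: "quasigeodesic \<delta> n \<gamma>" and n: "0 \<le> n" and th: "0 < \<theta>" "\<theta> \<le> 1/100000"
    and dl: "\<delta> = \<theta>^5" and pq: "\<gamma> 0 \<noteq> \<gamma> n"
  shows "\<gamma> ` {0..n} \<subseteq> hnbhd (5*\<theta>) (geodesic_segment (\<gamma> 0) (\<gamma> n))"
proof -
  define p where "p = \<gamma> 0"
  define q' where "q' = \<gamma> n"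
  have i0: "0 \<in> {0..n}" and iN: "n \<in> {0..n}" using n by auto
  have pH: "p \<in> H3" and qH: "q' \<in> H3" using qg_H3[OF q] i0 iN by (auto simp: p_def q'_def)
  have pq': "p \<noteq> q'" using pq by (simp add: p_def q'_def)
  define L where "L = hdist p q'"
  have L: "L > 0" using hdist_pos[OF pH qH pq'] by (simp add: L_def)
  have sL: "sinh L > 0" using L by simp
  have mpq: "mink p q' = cosh L" using cosh_hdist[OF pH qH] by (simp add: L_def)
  have mpp: "mink p p = 1" and mqq: "mink q' q' = 1" using pH qH by (auto simp: H3_def)
  define e1 where "e1 = (1 / sinh L) *\<^sub>R (q' - cosh L *\<^sub>R p)"
  have me11: "mink e1 e1 = -1"
  proof -
    have "mink e1 e1 = (1 / sinh L)^2 * (mink q' q' - 2 * cosh L * mink p q' + (cosh L)^2 * mink p p)"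
      by (simp add: e1_def mink_lin mink_sym[of q' p] power2_eq_square algebra_simps)
    also have "\<dots> = (1 - (cosh L)^2) / (sinh L)^2"
      using mpq mpp mqq by (simp add: power2_eq_square field_simps)
    also have "\<dots> = -1" using sL by (simp add: cosh_square_eq)
    finally show ?thesis .
  qed
  have me01: "mink p e1 = 0" using mpq mpp by (simp add: e1_def mink_lin)
  interpret Fr: frame p e1 by unfold_locales (use pH me11 me01 in auto)
  have qdec: "q' = cosh L *\<^sub>R p + sinh L *\<^sub>R e1"
    using sL by (simp add: e1_def)
  define c where "c \<tau> = cosh \<tau> *\<^sub>R p + sinh \<tau> *\<^sub>R e1" for \<tau>
  have c0: "c 0 = p" by (simp add: c_def)
  have cL: "c L = q'" using qdec by (simp add: c_def)
  have cseg: "c \<tau> \<in> geodesic_segment p q'" if "0 \<le> \<tau>" "\<tau> \<le> L" for \<tau>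
  proof -
    define t where "t = \<tau> / L"
    have t: "0 \<le> t" "t \<le> 1" using that L by (auto simp: t_def)
    have tL: "t * L = \<tau>" "(1 - t) * L = L - \<tau>" using L by (auto simp: t_def field_simps)
    have "gp p q' t = (sinh (L - \<tau>) / sinh L) *\<^sub>R p + (sinh \<tau> / sinh L) *\<^sub>R q'"
      by (simp add: gp_def Let_def L_def[symmetric] tL)
    also have "\<dots> = ((sinh (L - \<tau>) + sinh \<tau> * cosh L) / sinh L) *\<^sub>R p + (sinh \<tau>) *\<^sub>R e1"
      using sL by (subst qdec) (simp add: scaleR_add_right scaleR_add_left add_divide_distrib algebra_simps)
    also have "(sinh (L - \<tau>) + sinh \<tau> * cosh L) / sinh L = cosh \<tau>"
      using sL by (simp add: sinh_diff field_simps)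
    finally have g: "gp p q' t = c \<tau>" by (simp add: c_def)
    have "c \<tau> \<in> gp p q' ` {0..1}" by (rule image_eqI[of _ _ t]) (use g t in auto)
    thus ?thesis using seg_eq[OF pq'] by simp
  qed
  have X0p: "Fr.X0 p = 1" and X1p: "Fr.X1 p = 0" using mpp me01 by (auto simp: Fr.X0_def Fr.X1_def)
  have Wp: "Fr.Wf p = 0" by (simp add: Fr.Wf_def Fr.Yc_def X0p X1p)
  have X0q: "Fr.X0 q' = cosh L" using mpq by (simp add: Fr.X0_def mink_sym)
  have X1q: "Fr.X1 q' = sinh L"
  proof -
    have "mink q' e1 = (1 - cosh L * cosh L) / sinh L"
      using mpq mqq sL by (simp add: e1_def mink_lin mink_sym[of q' p] field_simps)
    also have "\<dots> = - sinh L" using sL by (simp add: cosh_square_eq[unfolded power2_eq_square] field_simps)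
    finally show ?thesis by (simp add: Fr.X1_def)
  qed
  have Wq: "Fr.Wf q' = 0"
  proof -
    have "Fr.Yc q' = q' - cosh L *\<^sub>R p - sinh L *\<^sub>R e1" by (simp add: Fr.Yc_def X0q X1q)
    also have "\<dots> = 0" using qdec by simp
    finally have "Fr.Yc q' = 0" .
    thus ?thesis by (simp add: Fr.Wf_def)
  qed
  have sgp: "Fr.sg p = 0" by (simp add: Fr.sg_def Fr.Pf_def Fr.Nf_def X0p X1p)
  have sgq: "Fr.sg q' = L"
  proof -
    have "Fr.Pf q' = exp L" by (simp add: Fr.Pf_def X0q X1q cosh_plus_sinh)
    moreover have "Fr.Nf q' = exp (- L)" by (simp add: Fr.Nf_def X0q X1q cosh_exp' sinh_exp field_simps)
    ultimately show ?thesis by (simp add: Fr.sg_def)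
  qed
  have noh: "Fr.Wf (\<gamma> t) < 4*\<theta>^2" if "t \<in> {0..n}" for t
    using Fr.no_high[OF q n th dl _ _ that] Wp Wq by (simp add: p_def q'_def)
  have th2: "\<theta> \<le> 1/2" using th by simp
  have cl: "hdist (\<gamma> s) (c (Fr.sg (\<gamma> s))) < 3*\<theta>" if "s \<in> {0..n}" for s
    using Fr.close[OF qg_H3[OF q that] noh[OF that] th(1) th2] by (simp add: c_def)
  have sgc: "continuous_on {0..n} (\<lambda>s. Fr.sg (\<gamma> s))" by (rule Fr.sg_cont[OF q])
  have dpos: "0 \<le> \<delta>" using th by (simp add: dl)
  show ?thesis
  proof
    fix x assume "x \<in> \<gamma> ` {0..n}"
    then obtain t where t: "t \<in> {0..n}" and x: "x = \<gamma> t" by auto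
    have xH: "x \<in> H3" using qg_H3[OF q t] x by simp
    have "\<exists>y\<in>geodesic_segment p q'. hdist x y < 5*\<theta>"
    proof (cases "Fr.sg x < 0")
      case True
      obtain t1 where t1: "t \<le> t1" "t1 \<le> n" "Fr.sg (\<gamma> t1) = 0"
        using IVT'[of "\<lambda>s. Fr.sg (\<gamma> s)" t 0 n] True x t sgq L sgc
          continuous_on_subset[OF sgc, of "{t..n}"] by (auto simp: q'_def)
      have t1i: "t1 \<in> {0..n}" using t t1 by auto
      have "hdist (\<gamma> t1) p < 3*\<theta>" using cl[OF t1i] t1 c0 by simp
      moreover have "\<bar>t1 - 0\<bar> / (1 + \<delta>) - \<delta> \<le> hdist (\<gamma> t1) (\<gamma> 0)" by (rule qg_lower[OF q t1i i0])
      ultimately have "t1 / (1 + \<delta>) < 3*\<theta> + \<delta>" using t1i by (simp add: p_def)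
      hence r: "t1 < (1 + \<delta>) * (3*\<theta> + \<delta>)" using dpos by (simp add: divide_less_eq algebra_simps)
      have "hdist (\<gamma> t) (\<gamma> 0) \<le> (1 + \<delta>) * \<bar>t - 0\<bar> + \<delta>" by (rule qg_upper[OF q t i0])
      also have "\<dots> \<le> (1 + \<delta>) * t1 + \<delta>" using t t1 dpos by (intro add_right_mono mult_left_mono) auto
      also have "\<dots> < 5*\<theta>" by (rule final_arith[OF th dl r]) (use t1i in auto)
      finally have "hdist x p < 5*\<theta>" using x by (simp add: p_def)
      moreover have "p \<in> geodesic_segment p q'" using cseg[of 0] c0 L by simp
      ultimately show ?thesis by blast
    next
      case False
      show ?thesis
      proof (cases "Fr.sg x > L")
        case True
        obtain t1 where t1: "0 \<le> t1" "t1 \<le> t" "Fr.sg (\<gamma> t1) = L"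
          using IVT'[of "\<lambda>s. Fr.sg (\<gamma> s)" 0 L t] True x t sgp L
            continuous_on_subset[OF sgc, of "{0..t}"] by (auto simp: p_def)
        have t1i: "t1 \<in> {0..n}" using t t1 by auto
        have "hdist (\<gamma> t1) q' < 3*\<theta>" using cl[OF t1i] t1 cL by simp
        hence h1: "hdist (\<gamma> n) (\<gamma> t1) < 3*\<theta>" by (simp add: hdist_sym q'_def)
        have "\<bar>n - t1\<bar> / (1 + \<delta>) - \<delta> \<le> hdist (\<gamma> n) (\<gamma> t1)" by (rule qg_lower[OF q iN t1i])
        hence "(n - t1) / (1 + \<delta>) < 3*\<theta> + \<delta>" using h1 t1i by simp
        hence r: "n - t1 < (1 + \<delta>) * (3*\<theta> + \<delta>)" using dpos by (simp add: divide_less_eq algebra_simps)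
        have "hdist (\<gamma> t) (\<gamma> n) \<le> (1 + \<delta>) * \<bar>t - n\<bar> + \<delta>" by (rule qg_upper[OF q t iN])
        also have "\<dots> \<le> (1 + \<delta>) * (n - t1) + \<delta>" using t t1 dpos by (intro add_right_mono mult_left_mono) auto
        also have "\<dots> < 5*\<theta>" by (rule final_arith[OF th dl r]) (use t1i in auto)
        finally have "hdist x q' < 5*\<theta>" using x by (simp add: q'_def)
        moreover have "q' \<in> geodesic_segment p q'" using cseg[of L] cL L by simp
        ultimately show ?thesis by blast
      next
        case False': False
        have "hdist x (c (Fr.sg x)) < 3*\<theta>" using cl[OF t] x by simp
        moreover have "c (Fr.sg x) \<in> geodesic_segment p q'" using cseg False False' by simp
        ultimately show ?thesis using th by (intro bexI[of _ "c (Fr.sg x)"]) auto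
      qed
    qed
    thus "x \<in> hnbhd (5*\<theta>) (geodesic_segment (\<gamma> 0) (\<gamma> n))"
      using xH by (simp add: hnbhd_def p_def q'_def)
  qed
qed


theorem mainTheorem14:
  shows "\<exists>\<delta>0>0. \<forall>\<delta>. 0 < \<delta> \<and> \<delta> < \<delta>0 \<longrightarrow>
     (\<forall>(n::real) (\<gamma>::real \<Rightarrow> pt4). 0 \<le> n \<and> quasigeodesic \<delta> n \<gamma> \<longrightarrow>
        \<gamma> ` {0..n} \<subseteq> hnbhd (5 * \<delta> powr (1/5)) (geodesic_segment (\<gamma> 0) (\<gamma> n)))"
proof (intro exI[of _ "(1/100000)^5 :: real"] conjI allI impI)
  show "(0::real) < (1/100000)^5" by simp
  fix \<delta> :: real and n :: real and \<gamma> :: "real \<Rightarrow> pt4"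
  assume d: "0 < \<delta> \<and> \<delta> < (1/100000)^5" and ng: "0 \<le> n \<and> quasigeodesic \<delta> n \<gamma>"
  have n: "0 \<le> n" and q: "quasigeodesic \<delta> n \<gamma>" using ng by auto
  define \<theta> where "\<theta> = \<delta> powr (1/5)"
  have thp: "\<theta> > 0" using d by (simp add: \<theta>_def)
  have th5: "\<theta>^5 = \<delta>"
  proof -
    have "\<theta>^5 = \<theta> powr (real 5)" using thp by (simp add: powr_realpow)
    also have "\<dots> = \<delta>" using d by (simp add: \<theta>_def powr_powr)
    finally show ?thesis .
  qed
  have thb: "\<theta> \<le> 1/100000"
  proof (rule ccontr)
    assume "\<not> ?thesis"
    hence "(1/100000)^5 < \<theta>^5" by (intro power_strict_mono) auto
    thus False using d th5 by simp
  qed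
  have dl: "\<delta> = \<theta>^5" using th5 by simp
  have eq: "5 * \<delta> powr (1/5) = 5 * \<theta>" by (simp add: \<theta>_def)
  show "\<gamma> ` {0..n} \<subseteq> hnbhd (5 * \<delta> powr (1/5)) (geodesic_segment (\<gamma> 0) (\<gamma> n))"
  proof (cases "\<gamma> 0 = \<gamma> n")
    case False
    show ?thesis unfolding eq by (rule final_case[OF q n thp thb dl False])
  next
    case True
    have i0: "0 \<in> {0..n}" and iN: "n \<in> {0..n}" using n by auto
    have pH: "\<gamma> 0 \<in> H3" using qg_H3[OF q i0] .
    have "\<bar>n - 0\<bar> / (1 + \<delta>) - \<delta> \<le> hdist (\<gamma> n) (\<gamma> 0)" by (rule qg_lower[OF q iN i0])
    hence "n / (1 + \<delta>) \<le> \<delta>" using True hdist_self[OF pH] n by simp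
    hence nb: "n \<le> \<delta> * (1 + \<delta>)" using d by (simp add: divide_le_eq)
    have r: "n < (1 + \<delta>) * (3*\<theta> + \<delta>)"
    proof -
      have "\<delta> * (1 + \<delta>) < (3*\<theta> + \<delta>) * (1 + \<delta>)" using thp d by (intro mult_strict_right_mono) auto
      thus ?thesis using nb by (simp add: mult.commute)
    qed
    show ?thesis
    proof
      fix x assume "x \<in> \<gamma> ` {0..n}"
      then obtain t where t: "t \<in> {0..n}" and x: "x = \<gamma> t" by auto
      have xH: "x \<in> H3" using qg_H3[OF q t] x by simp
      have "hdist (\<gamma> t) (\<gamma> 0) \<le> (1 + \<delta>) * \<bar>t - 0\<bar> + \<delta>" by (rule qg_upper[OF q t i0])
      also have "\<dots> \<le> (1 + \<delta>) * n + \<delta>" using t d by (intro add_right_mono mult_left_mono) auto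
      also have "\<dots> < 5*\<theta>" by (rule final_arith[OF thp thb dl r n])
      finally have "hdist x (\<gamma> 0) < 5 * \<delta> powr (1/5)" using x eq by simp
      thus "x \<in> hnbhd (5 * \<delta> powr (1/5)) (geodesic_segment (\<gamma> 0) (\<gamma> n))"
        using xH True by (simp add: hnbhd_def geodesic_segment_def)
    qed
  qed
qed


end
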